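(* Let $K=\mathbb{Q}(\beta)$ be a totally real number field of degree $4$ with $\beta\in\mathcal{O}_K$. Then $\operatorname{disc} K\le \frac{2^{12}}{5^5}\,\lceil\!\overline{\beta}\!\rceil^{12}$, where $\lceil\!\overline{\beta}\!\rceil$ denotes the house of $\beta$.
   Context: $\mathcal{O}_K$ is the ring of integers of $K$. The house of $\beta\in K$ is $\max_i|\sigma_i(\beta)|$, the maximum over the real embeddings $\sigma_i:K\hookrightarrow\mathbb{R}$. $\operatorname{disc}K$ is the discriminant of $K$. *)

theory Defs
  imports Complex_Main "HOL-Computational_Algebra.Polynomial_Factorial"
    "Jordan_Normal_Form.Determinant"
begin

definition rpoly :: "rat poly \<Rightarrow> real \<Rightarrow> real" where
  "rpoly q x = poly (map_poly of_rat q) x"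

definition cpoly :: "rat poly \<Rightarrow> complex \<Rightarrow> complex" where
  "cpoly q z = poly (map_poly of_rat q) z"

definition alg_int :: "real \<Rightarrow> bool" where
  "alg_int x \<longleftrightarrow> (\<exists>p :: int poly. lead_coeff p = 1 \<and> poly (map_poly of_int p) x = 0)"

definition min_poly :: "real \<Rightarrow> rat poly" where
  "min_poly \<beta> = (SOME m. lead_coeff m = 1 \<and> irreducible m \<and> rpoly m \<beta> = 0)"

definition Qadj :: "real \<Rightarrow> real set" where
  "Qadj \<beta> = {rpoly q \<beta> | q. True}"

definition ring_of_integers :: "real \<Rightarrow> real set" where
  "ring_of_integers \<beta> = {x \<in> Qadj \<beta>. alg_int x}"

definition conjs :: "real \<Rightarrow> complex set" where
  "conjs \<beta> = {z. cpoly (min_poly \<beta>) z = 0}"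

(* the embedding K \<rightarrow> C sending beta to the conjugate z *)
definition embed :: "real \<Rightarrow> complex \<Rightarrow> real \<Rightarrow> complex" where
  "embed \<beta> z x = cpoly (SOME q. x = rpoly q \<beta>) z"

definition totally_real :: "real \<Rightarrow> bool" where
  "totally_real \<beta> \<longleftrightarrow> conjs \<beta> \<subseteq> \<real>"

definition trace :: "real \<Rightarrow> real \<Rightarrow> complex" where
  "trace \<beta> x = (\<Sum>z\<in>conjs \<beta>. embed \<beta> z x)"

definition integral_basis :: "real \<Rightarrow> (nat \<Rightarrow> real) \<Rightarrow> bool" where
  "integral_basis \<beta> \<omega> \<longleftrightarrow>
     (let n = degree (min_poly \<beta>) in
       (\<forall>i<n. \<omega> i \<in> ring_of_integers \<beta>) \<and>
       (\<forall>x\<in>ring_of_integers \<beta>. \<exists>c :: nat \<Rightarrow> int. x = (\<Sum>i<n. of_int (c i) * \<omega> i)) \<and>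
       (\<forall>c :: nat \<Rightarrow> int. (\<Sum>i<n. of_int (c i) * \<omega> i) = 0 \<longrightarrow> (\<forall>i<n. c i = 0)))"

(* disc K = det (Tr(w_i w_j)) for an integral basis w (independent of the choice) *)
definition field_disc :: "real \<Rightarrow> real" where
  "field_disc \<beta> =
     (let n = degree (min_poly \<beta>); \<omega> = (SOME \<omega>. integral_basis \<beta> \<omega>) in
       Re (det (mat n n (\<lambda>(i, j). trace \<beta> (\<omega> i * \<omega> j)))))"

definition house :: "real \<Rightarrow> real" where
  "house \<beta> = Max (cmod ` conjs \<beta>)"

end

theory Submission
  imports Defs "Jordan_Normal_Form.Char_Poly" "Subresultants.Resultant_Prelim"
    "HOL-Computational_Algebra.Field_as_Ring"
begin


interpretation qR: map_poly_inj_idom_divide_hom "of_rat :: rat \<Rightarrow> real" ..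
interpretation qC: map_poly_inj_idom_divide_hom "of_rat :: rat \<Rightarrow> complex" ..

lemma rpoly_add[simp]: "rpoly (p + q) x = rpoly p x + rpoly q x"
  by (simp add: rpoly_def qR.hom_add)
lemma rpoly_mult[simp]: "rpoly (p * q) x = rpoly p x * rpoly q x"
  by (simp add: rpoly_def qR.hom_mult)
lemma rpoly_diff[simp]: "rpoly (p - q) x = rpoly p x - rpoly q x"
  by (simp add: rpoly_def qR.hom_minus)
lemma rpoly_uminus[simp]: "rpoly (- p) x = - rpoly p x"
  by (simp add: rpoly_def qR.hom_uminus)
lemma rpoly_const[simp]: "rpoly [:c:] x = of_rat c"
  by (simp add: rpoly_def of_rat_hom.map_poly_pCons_hom)
lemma rpoly_0[simp]: "rpoly 0 x = 0"
  by (simp add: rpoly_def)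
lemma rpoly_1[simp]: "rpoly 1 x = 1"
  by (simp add: rpoly_def)
lemma rpoly_X[simp]: "rpoly [:0,1:] x = x"
  by (simp add: rpoly_def)
lemma rpoly_power[simp]: "rpoly (p ^ n) x = rpoly p x ^ n"
  by (induct n) auto
lemma rpoly_smult[simp]: "rpoly (smult c p) x = of_rat c * rpoly p x"
  by (simp add: rpoly_def of_rat_hom.map_poly_hom_smult)
lemma rpoly_sum[simp]: "rpoly (sum f A) x = (\<Sum>a\<in>A. rpoly (f a) x)"
  by (induct A rule: infinite_finite_induct) auto

lemma cpoly_of_real: "cpoly q (complex_of_real t) = complex_of_real (rpoly q t)"
proof -
  have e: "(of_real \<circ> (of_rat :: rat \<Rightarrow> real)) = (of_rat :: rat \<Rightarrow> complex)"
    by (rule ext, case_tac x, simp add: of_rat_rat)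
  have "map_poly (of_rat :: rat \<Rightarrow> complex) q = map_poly of_real (map_poly of_rat q)"
    by (simp add: map_poly_map_poly e)
  thus ?thesis unfolding cpoly_def rpoly_def by (simp add: of_real_hom.poly_map_poly)
qed

lemma alg_int_poly: "alg_int b \<Longrightarrow> \<exists>q::rat poly. q \<noteq> 0 \<and> rpoly q b = 0"
proof -
  assume "alg_int b"
  then obtain p :: "int poly" where p: "lead_coeff p = 1" "poly (map_poly of_int p) b = 0"
    unfolding alg_int_def by auto
  have e: "(of_rat \<circ> (of_int :: int \<Rightarrow> rat)) = (of_int :: int \<Rightarrow> real)"
    by (rule ext, simp)
  have "p \<noteq> 0" using p by auto
  hence "map_poly (of_int :: int \<Rightarrow> rat) p \<noteq> 0" by simp
  moreover have "rpoly (map_poly of_int p) b = 0"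
    unfolding rpoly_def using p by (simp add: map_poly_map_poly e)
  ultimately show ?thesis by blast
qed

lemma min_poly_props:
  assumes "\<exists>q::rat poly. q \<noteq> 0 \<and> rpoly q b = 0"
  shows "lead_coeff (min_poly b) = 1 \<and> irreducible (min_poly b) \<and> rpoly (min_poly b) b = 0"
proof -
  define P where "P = (\<lambda>n. \<exists>q::rat poly. q \<noteq> 0 \<and> rpoly q b = 0 \<and> degree q = n)"
  have ex: "\<exists>n. P n" using assms P_def by auto
  define n where "n = (LEAST n. P n)"
  from LeastI_ex[OF ex] obtain q where q: "q \<noteq> 0" "rpoly q b = 0" "degree q = n"
    unfolding P_def n_def by auto
  have mn: "\<And>q'. q' \<noteq> 0 \<Longrightarrow> rpoly q' b = 0 \<Longrightarrow> n \<le> degree q'"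
    unfolding n_def P_def by (rule Least_le) auto
  define m where "m = smult (inverse (lead_coeff q)) q"
  have lc: "lead_coeff q \<noteq> 0" using q(1) by simp
  have m0: "m \<noteq> 0" using q lc unfolding m_def by simp
  have mlc: "lead_coeff m = 1" using lc unfolding m_def by simp
  have mr: "rpoly m b = 0" using q unfolding m_def by simp
  have md: "degree m = n" using q lc unfolding m_def by simp
  have mpos: "degree m > 0"
  proof (rule ccontr)
    assume "\<not> 0 < degree m"
    then obtain c where "m = [:c:]" by (metis degree_eq_zeroE gr0I)
    thus False using mlc mr by simp
  qed
  have "irreducible m"
  proof (rule irreducibleI)
    show "m \<noteq> 0" by fact
    show "\<not> is_unit m" using mpos m0 by (simp add: is_unit_iff_degree)
    fix a c assume mac: "m = a * c"
    hence a0: "a \<noteq> 0" and c0: "c \<noteq> 0" using m0 by auto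
    have dsum: "degree m = degree a + degree c" using mac a0 c0 by (simp add: degree_mult_eq)
    have "rpoly a b = 0 \<or> rpoly c b = 0" using mr mac by simp
    thus "is_unit a \<or> is_unit c"
    proof
      assume "rpoly a b = 0"
      hence "n \<le> degree a" using mn a0 by auto
      hence "degree c = 0" using dsum md by linarith
      thus ?thesis using c0 by (simp add: is_unit_iff_degree)
    next
      assume "rpoly c b = 0"
      hence "n \<le> degree c" using mn c0 by auto
      hence "degree a = 0" using dsum md by linarith
      thus ?thesis using a0 by (simp add: is_unit_iff_degree)
    qed
  qed
  hence "\<exists>m. lead_coeff m = 1 \<and> irreducible m \<and> rpoly m b = 0" using mlc mr by blast
  from someI_ex[OF this] show ?thesis unfolding min_poly_def .
qed

lemma irr_dvd:
  assumes irr: "irreducible (m :: rat poly)" and mr: "rpoly m b = 0" and qr: "rpoly q b = 0"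
  shows "m dvd q"
proof -
  let ?g = "gcd m q"
  have bz: "fst (bezout_coefficients m q) * m + snd (bezout_coefficients m q) * q = ?g"
    by (rule bezout_coefficients_fst_snd)
  have gr: "rpoly ?g b = 0"
    using arg_cong[OF bz, of "\<lambda>p. rpoly p b"] mr qr by simp
  obtain c where mc: "m = ?g * c" by (meson dvd_def gcd_dvd1)
  from irreducibleD[OF irr mc] show ?thesis
  proof
    assume "is_unit ?g"
    then obtain k where k: "?g = [:k:]" "is_unit k" using is_unit_poly_iff by blast
    hence "k \<noteq> 0" by auto
    thus ?thesis using gr k by simp
  next
    assume "is_unit c"
    hence "m dvd ?g" using mc by (metis dvd_mult_unit_iff dvd_refl)
    thus ?thesis using gcd_dvd2 dvd_trans by blast
  qed
qed


lemma cpoly_add[simp]: "cpoly (p + q) x = cpoly p x + cpoly q x"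
  by (simp add: cpoly_def qC.hom_add)
lemma cpoly_mult[simp]: "cpoly (p * q) x = cpoly p x * cpoly q x"
  by (simp add: cpoly_def qC.hom_mult)
lemma cpoly_const[simp]: "cpoly [:c:] x = of_rat c"
  by (simp add: cpoly_def of_rat_hom.map_poly_pCons_hom)

lemma roots_exist:
  assumes ai: "alg_int b" and deg: "degree (min_poly b) = 4" and tr: "totally_real b"
  shows "\<exists>r::nat\<Rightarrow>real. inj_on r {..<4} \<and> conjs b = (\<lambda>k. complex_of_real (r k)) ` {..<4} \<and>
     (\<forall>x. rpoly (min_poly b) x = (\<Prod>k<4. x - r k))"
proof -
  let ?m = "min_poly b"
  have mp: "lead_coeff ?m = 1" "irreducible ?m" "rpoly ?m b = 0"
    using min_poly_props[OF alg_int_poly[OF ai]] by auto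
  define mc where "mc = map_poly (of_rat :: rat \<Rightarrow> complex) ?m"
  have mc0: "mc \<noteq> 0" and dmc: "degree mc = 4" and lmc: "lead_coeff mc = 1"
    using mp deg unfolding mc_def by auto
  have cj: "conjs b = {z. poly mc z = 0}" unfolding conjs_def cpoly_def mc_def ..
  let ?d = "pderiv ?m"
  let ?g = "gcd ?m ?d"
  have d0: "?d \<noteq> 0" using deg by (simp add: pderiv_eq_0_iff)
  have dd: "degree ?d = 3" using deg by (simp add: degree_pderiv)
  obtain c where mcg: "?m = ?g * c" by (meson dvd_def gcd_dvd1)
  have "is_unit ?g"
    using irreducibleD[OF mp(2) mcg]
  proof
    assume "is_unit c"
    hence "?m dvd ?g" using mcg by (metis dvd_mult_unit_iff dvd_refl)
    hence "?m dvd ?d" using gcd_dvd2 dvd_trans by blast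
    hence "degree ?m \<le> degree ?d" using d0 by (simp add: dvd_imp_degree_le)
    thus ?thesis using deg dd by simp
  qed
  then obtain k where k: "?g = [:k:]" "is_unit k" using is_unit_poly_iff by blast
  hence k0: "k \<noteq> 0" by auto
  have bz: "fst (bezout_coefficients ?m ?d) * ?m + snd (bezout_coefficients ?m ?d) * ?d = ?g"
    by (rule bezout_coefficients_fst_snd)
  have "rsquarefree mc"
    unfolding rsquarefree_roots
  proof (intro allI notI)
    fix a assume a: "poly mc a = 0 \<and> poly (pderiv mc) a = 0"
    have "cpoly ?d a = 0" using a unfolding mc_def cpoly_def by (simp add: of_rat_hom.map_poly_pderiv)
    moreover have "cpoly ?m a = 0" using a unfolding mc_def cpoly_def by simp
    ultimately have "cpoly ?g a = 0" using arg_cong[OF bz, of "\<lambda>p. cpoly p a"] by simp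
    thus False using k k0 by simp
  qed
  hence card: "card {z. poly mc z = 0} = 4" using rsquarefree_card_degree[OF mc0] dmc by simp
  from fundamental_theorem_algebra_factorized[of mc] obtain as where
    as: "smult (coeff mc (degree mc)) (\<Prod>a\<leftarrow>as. [:- a, 1:]) = mc" "length as = degree mc" by blast
  have mcp: "mc = (\<Prod>a\<leftarrow>as. [:- a, 1:])" using as lmc by simp
  have ras: "{z. poly mc z = 0} = set as" unfolding mcp poly_prod_list prod_list_zero_iff by auto
  have das: "distinct as" using card ras as dmc by (metis card_distinct)
  have fin: "finite (conjs b)" using cj card by (metis card.infinite zero_neq_numeral)
  obtain h where h: "bij_betw h {0..<4::nat} (conjs b)"
    using ex_bij_betw_nat_finite[OF fin] card cj by auto
  define r where "r = (\<lambda>k. Re (h k))"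
  have hr: "\<And>k. k < 4 \<Longrightarrow> h k = complex_of_real (r k)"
  proof -
    fix k :: nat assume "k < 4"
    hence "h k \<in> conjs b" using h by (auto simp: bij_betw_def)
    hence "h k \<in> \<real>" using tr unfolding totally_real_def by auto
    thus "h k = complex_of_real (r k)" unfolding r_def by (metis Reals_cases Re_complex_of_real)
  qed
  have img: "conjs b = (\<lambda>k. complex_of_real (r k)) ` {..<4}"
    using h hr unfolding bij_betw_def by (auto simp: lessThan_atLeast0)
  have inj: "inj_on r {..<4}"
  proof (rule inj_onI)
    fix i j assume "i \<in> {..<4}" "j \<in> {..<4}" "r i = r j"
    hence "h i = h j" using hr by auto
    thus "i = j" using h \<open>i \<in> {..<4}\<close> \<open>j \<in> {..<4}\<close> unfolding bij_betw_def inj_on_def by auto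
  qed
  have mcprod: "mc = (\<Prod>a\<in>conjs b. [:- a, 1:])"
    unfolding cj ras using prod.distinct_set_conv_list[OF das, of "\<lambda>a. [:- a, 1:]"] mcp by simp
  also have "\<dots> = (\<Prod>k<4. [:- complex_of_real (r k), 1:])"
    unfolding img by (subst prod.reindex) (auto intro: inj_on_imageI2 simp: inj_on_def inj[unfolded inj_on_def])
  finally have mcprod2: "mc = (\<Prod>k<4. [:- complex_of_real (r k), 1:])" .
  have fac: "\<forall>x. rpoly ?m x = (\<Prod>k<4. x - r k)"
  proof
    fix x
    have "complex_of_real (rpoly ?m x) = cpoly ?m (complex_of_real x)" by (simp add: cpoly_of_real)
    also have "\<dots> = poly mc (complex_of_real x)" unfolding cpoly_def mc_def ..
    also have "\<dots> = (\<Prod>k<4. complex_of_real x - complex_of_real (r k))"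
      unfolding mcprod2 poly_prod by simp
    also have "\<dots> = complex_of_real (\<Prod>k<4. x - r k)" by simp
    finally show "rpoly ?m x = (\<Prod>k<4. x - r k)" using of_real_eq_iff by blast
  qed
  show ?thesis using inj img fac by blast
qed


definition zspan :: "real set \<Rightarrow> real set" where
  "zspan G = {x. \<exists>c::real\<Rightarrow>int. x = (\<Sum>g\<in>G. of_int (c g) * g)}"

lemma zspan_0: "0 \<in> zspan G"
  unfolding zspan_def by (rule CollectI, rule exI[of _ "\<lambda>_. 0"]) simp

lemma zspan_add: "x \<in> zspan G \<Longrightarrow> y \<in> zspan G \<Longrightarrow> x + y \<in> zspan G"
proof -
  assume "x \<in> zspan G" "y \<in> zspan G"
  then obtain c d where "x = (\<Sum>g\<in>G. of_int (c g) * g)" "y = (\<Sum>g\<in>G. of_int (d g) * g)"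
    unfolding zspan_def by auto
  hence "x + y = (\<Sum>g\<in>G. of_int (c g + d g) * g)" by (simp add: sum.distrib algebra_simps)
  thus ?thesis unfolding zspan_def by (auto intro!: exI[of _ "\<lambda>g. c g + d g"])
qed

lemma zspan_smult: "x \<in> zspan G \<Longrightarrow> of_int a * x \<in> zspan G"
proof -
  assume "x \<in> zspan G"
  then obtain c where "x = (\<Sum>g\<in>G. of_int (c g) * g)"
    unfolding zspan_def by auto
  hence "of_int a * x = (\<Sum>g\<in>G. of_int (a * c g) * g)" by (simp add: sum_distrib_left algebra_simps)
  thus ?thesis unfolding zspan_def by (auto intro!: exI[of _ "\<lambda>g. a * c g"])
qed

lemma zspan_base: "finite G \<Longrightarrow> g \<in> G \<Longrightarrow> g \<in> zspan G"
proof -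
  assume "finite G" "g \<in> G"
  have "(\<Sum>h\<in>G. of_int (if h = g then 1 else 0) * h) = (\<Sum>h\<in>G. if h = g then h else 0)"
    by (rule sum.cong) auto
  also have "\<dots> = g" using \<open>finite G\<close> \<open>g \<in> G\<close> by (simp add: sum.delta)
  finally show ?thesis unfolding zspan_def by (auto intro!: exI[of _ "\<lambda>h. if h = g then 1 else 0"])
qed

lemma zspan_sum: "finite I \<Longrightarrow> (\<And>i. i \<in> I \<Longrightarrow> f i \<in> zspan G) \<Longrightarrow> (\<Sum>i\<in>I. f i) \<in> zspan G"
  by (induct I rule: finite_induct) (auto intro: zspan_0 zspan_add)

lemma zspan_subset: "finite A \<Longrightarrow> A \<subseteq> zspan B \<Longrightarrow> x \<in> zspan A \<Longrightarrow> x \<in> zspan B"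
proof -
  assume "finite A" "A \<subseteq> zspan B" "x \<in> zspan A"
  then obtain c where "x = (\<Sum>g\<in>A. of_int (c g) * g)" unfolding zspan_def by auto
  thus ?thesis using \<open>finite A\<close> \<open>A \<subseteq> zspan B\<close> by (auto intro!: zspan_sum zspan_smult)
qed

definition pset :: "real set \<Rightarrow> real set \<Rightarrow> real set" where
  "pset A B = (\<lambda>(a,b). a * b) ` (A \<times> B)"

lemma zspan_mult:
  assumes "finite A" "finite B" "x \<in> zspan A" "y \<in> zspan B"
  shows "x * y \<in> zspan (pset A B)"
proof -
  obtain c where c: "x = (\<Sum>g\<in>A. of_int (c g) * g)" using assms unfolding zspan_def by auto
  obtain d where d: "y = (\<Sum>g\<in>B. of_int (d g) * g)" using assms unfolding zspan_def by auto
  have fin: "finite (pset A B)" unfolding pset_def using assms by auto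
  have "x * y = (\<Sum>a\<in>A. \<Sum>b\<in>B. of_int (c a * d b) * (a * b))"
    unfolding c d sum_product by (simp add: algebra_simps)
  also have "\<dots> \<in> zspan (pset A B)"
    using assms fin by (intro zspan_sum zspan_smult zspan_base) (auto simp: pset_def)
  finally show ?thesis .
qed

lemma fm_criterion:
  assumes fin: "finite G" and nz: "g0 \<in> G" "g0 \<noteq> 0" and cl: "\<And>g. g \<in> G \<Longrightarrow> y * g \<in> zspan G"
  shows "alg_int y"
proof -
  define gs where "gs = sorted_list_of_set G"
  have sg: "set gs = G" and dg: "distinct gs" using fin unfolding gs_def by auto
  define N where "N = length gs"
  have sumconv: "\<And>f :: real \<Rightarrow> real. (\<Sum>g\<in>G. f g) = (\<Sum>j<N. f (gs ! j))"
  proof -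
    fix f :: "real \<Rightarrow> real"
    have "(\<Sum>g\<in>G. f g) = sum_list (map f gs)" using sum.distinct_set_conv_list[OF dg] sg by simp
    also have "\<dots> = (\<Sum>j<N. f (gs ! j))" unfolding N_def sum_list_sum_nth by (simp add: lessThan_atLeast0)
    finally show "(\<Sum>g\<in>G. f g) = (\<Sum>j<N. f (gs ! j))" .
  qed
  have "\<forall>i<N. \<exists>c::real\<Rightarrow>int. y * gs ! i = (\<Sum>g\<in>G. of_int (c g) * g)"
    using cl sg unfolding N_def zspan_def by auto
  then obtain c where c: "\<And>i. i < N \<Longrightarrow> y * gs ! i = (\<Sum>g\<in>G. of_int (c i g) * g)" by metis
  define A :: "int mat" where "A = mat N N (\<lambda>(i,j). c i (gs ! j))"
  define AR :: "real mat" where "AR = map_mat of_int A"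
  define v :: "real vec" where "v = vec N (\<lambda>j. gs ! j)"
  have A: "A \<in> carrier_mat N N" unfolding A_def by simp
  have AR: "AR \<in> carrier_mat N N" unfolding AR_def A_def by simp
  have "eigenvector AR v y"
    unfolding eigenvector_def
  proof (intro conjI)
    show "v \<in> carrier_vec (dim_row AR)" using AR unfolding v_def by simp
    obtain j where "j < N" "gs ! j = g0" using nz sg unfolding N_def by (metis in_set_conv_nth)
    thus "v \<noteq> 0\<^sub>v (dim_row AR)" using AR nz unfolding v_def by (metis carrier_matD(1) index_vec index_zero_vec(1))
    show "AR *\<^sub>v v = y \<cdot>\<^sub>v v"
    proof (rule eq_vecI)
      fix i assume "i < dim_vec (y \<cdot>\<^sub>v v)"
      hence i: "i < N" unfolding v_def by simp
      have "(AR *\<^sub>v v) $ i = (\<Sum>j<N. of_int (c i (gs ! j)) * gs ! j)"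
        using i unfolding AR_def A_def v_def by (simp add: scalar_prod_def lessThan_atLeast0)
      also have "\<dots> = y * gs ! i" using c[OF i] sumconv by simp
      finally show "(AR *\<^sub>v v) $ i = (y \<cdot>\<^sub>v v) $ i" using i unfolding v_def by simp
    qed (simp add: AR_def A_def v_def)
  qed
  hence "eigenvalue AR y" unfolding eigenvalue_def by blast
  hence "poly (char_poly AR) y = 0" using eigenvalue_root_char_poly[OF AR] by simp
  hence "poly (map_poly of_int (char_poly A)) y = 0"
    unfolding AR_def of_int_hom.char_poly_hom[OF A] by simp
  moreover have "lead_coeff (char_poly A) = 1" using degree_monic_char_poly[OF A] by simp
  ultimately show ?thesis unfolding alg_int_def by blast
qed

lemma pow_zspan:
  fixes p :: "int poly"
  assumes lc: "lead_coeff p = 1" and rt: "poly (map_poly of_int p) x = (0::real)"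
  shows "degree p > 0" "x ^ u \<in> zspan ((\<lambda>i. x ^ i) ` {..<degree p})"
proof -
  define n where "n = degree p"
  define G where "G = (\<lambda>i. x ^ i) ` {..<n}"
  have fG: "finite G" unfolding G_def by simp
  show npos: "degree p > 0"
  proof (rule ccontr)
    assume "\<not> degree p > 0"
    hence "degree p = 0" by simp
    hence "p = [:1:]" using lc by (metis leading_coeff_0_iff pCons_0_0 degree_eq_zeroE coeff_pCons_0)
    thus False using rt by simp
  qed
  have xn: "x ^ n \<in> zspan G"
  proof -
    have "0 = (\<Sum>i\<le>n. of_int (coeff p i) * x ^ i)"
      using rt unfolding n_def by (simp add: poly_altdef degree_map_poly coeff_map_poly)
    also have "\<dots> = (\<Sum>i<n. of_int (coeff p i) * x ^ i) + x ^ n"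
      using lc unfolding n_def by (simp add: lessThan_Suc_atMost[symmetric])
    finally have "x ^ n = (\<Sum>i<n. of_int (- coeff p i) * x ^ i)" by (simp add: sum_negf)
    also have "\<dots> \<in> zspan G" using fG by (intro zspan_sum zspan_smult zspan_base) (auto simp: G_def)
    finally show ?thesis .
  qed
  have xg: "\<And>g. g \<in> G \<Longrightarrow> x * g \<in> zspan G"
  proof -
    fix g assume "g \<in> G"
    then obtain i where i: "i < n" "g = x ^ i" unfolding G_def by auto
    show "x * g \<in> zspan G"
    proof (cases "Suc i < n")
      case True thus ?thesis using i fG by (intro zspan_base) (auto simp: G_def intro!: image_eqI[of _ _ "Suc i"])
    next
      case False hence "Suc i = n" using i by simp
      hence "x * g = x ^ n" using i by (metis power_Suc)
      thus ?thesis using xn by simp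
    qed
  qed
  have xs: "\<And>z. z \<in> zspan G \<Longrightarrow> x * z \<in> zspan G"
  proof -
    fix z assume "z \<in> zspan G"
    then obtain c where "z = (\<Sum>g\<in>G. of_int (c g) * g)" unfolding zspan_def by auto
    hence "x * z = (\<Sum>g\<in>G. of_int (c g) * (x * g))" by (simp add: sum_distrib_left algebra_simps)
    also have "\<dots> \<in> zspan G" using fG xg by (intro zspan_sum zspan_smult) auto
    finally show "x * z \<in> zspan G" .
  qed
  have "x ^ u \<in> zspan G"
  proof (induct u)
    case 0 show ?case using npos fG n_def by (intro zspan_base) (auto simp: G_def intro!: image_eqI[of _ _ 0])
  next
    case (Suc u) thus ?case using xs by simp
  qed
  thus "x ^ u \<in> zspan ((\<lambda>i. x ^ i) ` {..<degree p})" unfolding G_def n_def .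
qed

lemma alg_int_add_mult:
  assumes "alg_int x" "alg_int y"
  shows "alg_int (x + y) \<and> alg_int (x * y)"
proof -
  obtain p where p: "lead_coeff p = 1" "poly (map_poly of_int p) x = 0" using assms unfolding alg_int_def by auto
  obtain q where q: "lead_coeff q = 1" "poly (map_poly of_int q) y = 0" using assms unfolding alg_int_def by auto
  define Gx where "Gx = (\<lambda>i. x ^ i) ` {..<degree p}"
  define Gy where "Gy = (\<lambda>i. y ^ i) ` {..<degree q}"
  have fx: "finite Gx" and fy: "finite Gy" unfolding Gx_def Gy_def by auto
  note px = pow_zspan[OF p, folded Gx_def] and qy = pow_zspan[OF q, folded Gy_def]
  define G where "G = pset Gx Gy"
  have fG: "finite G" unfolding G_def pset_def using fx fy by auto
  have one: "1 \<in> G" unfolding G_def pset_def Gx_def Gy_def using px(1) qy(1)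
    by (auto intro!: image_eqI[of _ _ "(1,1)"] image_eqI[of _ _ 0])
  have bx: "\<And>a. a \<in> Gx \<Longrightarrow> a \<in> zspan Gx" using fx zspan_base by auto
  have by': "\<And>a. a \<in> Gy \<Longrightarrow> a \<in> zspan Gy" using fy zspan_base by auto
  have xa: "\<And>a. a \<in> Gx \<Longrightarrow> x * a \<in> zspan Gx"
  proof -
    fix a assume "a \<in> Gx" then obtain i where "a = x ^ i" unfolding Gx_def by auto
    thus "x * a \<in> zspan Gx" using px(2)[of "Suc i"] by simp
  qed
  have yb: "\<And>b. b \<in> Gy \<Longrightarrow> y * b \<in> zspan Gy"
  proof -
    fix b assume "b \<in> Gy" then obtain i where "b = y ^ i" unfolding Gy_def by auto
    thus "y * b \<in> zspan Gy" using qy(2)[of "Suc i"] by simp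
  qed
  have "alg_int (x + y)"
  proof (rule fm_criterion[OF fG one])
    fix g assume "g \<in> G"
    then obtain a b where ab: "a \<in> Gx" "b \<in> Gy" "g = a * b" unfolding G_def pset_def by auto
    have "(x + y) * g = (x * a) * b + a * (y * b)" using ab by (simp add: algebra_simps)
    also have "\<dots> \<in> zspan G" unfolding G_def
      by (intro zspan_add zspan_mult fx fy xa yb bx by' ab)
    finally show "(x + y) * g \<in> zspan G" .
  qed simp
  moreover have "alg_int (x * y)"
  proof (rule fm_criterion[OF fG one])
    fix g assume "g \<in> G"
    then obtain a b where ab: "a \<in> Gx" "b \<in> Gy" "g = a * b" unfolding G_def pset_def by auto
    have "(x * y) * g = (x * a) * (y * b)" using ab by (simp add: algebra_simps)
    also have "\<dots> \<in> zspan G" unfolding G_def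
      by (intro zspan_mult fx fy xa yb ab)
    finally show "(x * y) * g \<in> zspan G" .
  qed simp
  ultimately show ?thesis by blast
qed

lemma alg_int_iff: "alg_int x \<longleftrightarrow> algebraic_int x"
  unfolding alg_int_def algebraic_int_altdef_ipoly by blast

lemma alg_int_rat_int: "alg_int x \<Longrightarrow> x \<in> \<rat> \<Longrightarrow> x \<in> \<int>"
  unfolding alg_int_iff using rational_algebraic_int_is_int by blast

lemma alg_int_of_int: "alg_int (of_int n)"
  unfolding alg_int_iff by (rule int_imp_algebraic_int) simp


lemma sum4: "(\<Sum>j<4::nat. f j) = f 0 + f 1 + f 2 + (f 3 :: 'a::comm_monoid_add)"
  by (simp add: eval_nat_numeral lessThan_Suc add.commute add.left_commute)
lemma sum5: "(\<Sum>j\<le>4::nat. f j) = f 0 + f 1 + f 2 + f 3 + (f 4 :: 'a::comm_monoid_add)"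
  by (simp add: eval_nat_numeral atMost_Suc add.commute add.left_commute)
lemma prod4: "(\<Prod>j<4::nat. f j) = f 0 * f 1 * f 2 * (f 3 :: 'a::comm_monoid_mult)"
  by (simp add: eval_nat_numeral lessThan_Suc mult.commute mult.left_commute)

lemma rpoly_deg3:
  assumes "degree q \<le> 3"
  shows "rpoly q t = (\<Sum>j<4. of_rat (coeff q j) * t ^ j)"
proof -
  have "rpoly q t = (\<Sum>j\<le>degree q. of_rat (coeff q j) * t ^ j)"
    unfolding rpoly_def poly_altdef by (simp add: of_rat_hom.coeff_map_poly_hom)
  also have "\<dots> = (\<Sum>j<4. of_rat (coeff q j) * t ^ j)"
    using assms by (intro sum.mono_neutral_left) (auto simp: coeff_eq_0)
  finally show ?thesis .
qed

lemma newton2: "a^2 + b^2 + c^2 + d^2 = (a+b+c+d)^2 - 2 * (a*b+a*c+a*d+b*c+b*d+c*d::real)"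
  by (simp add: power2_eq_square power3_eq_cube algebra_simps)
lemma newton3: "a^3 + b^3 + c^3 + d^3 = (a+b+c+d)^3 - 3 * (a+b+c+d) * (a*b+a*c+a*d+b*c+b*d+c*d) + 3 * (a*b*c+a*b*d+a*c*d+b*c*d::real)"
  by (simp add: power2_eq_square power3_eq_cube algebra_simps)

locale qf =
  fixes b :: real and r :: "nat \<Rightarrow> real"
  assumes ai: "alg_int b" and deg: "degree (min_poly b) = 4"
    and rinj: "inj_on r {..<4}"
    and cj: "conjs b = (\<lambda>k. complex_of_real (r k)) ` {..<4}"
    and fac: "\<And>x. rpoly (min_poly b) x = (\<Prod>k<4. x - r k)"
begin

abbreviation "m \<equiv> min_poly b"

lemma mp: "lead_coeff m = 1" "irreducible m" "rpoly m b = 0"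
  using min_poly_props[OF alg_int_poly[OF ai]] by auto

lemma mdvd: "rpoly q b = 0 \<Longrightarrow> m dvd q"
  using irr_dvd[OF mp(2) mp(3)] by blast

lemma rroot: "k < 4 \<Longrightarrow> rpoly m (r k) = 0"
  unfolding fac by (rule prod_zero) auto

lemma emb: "k < 4 \<Longrightarrow> rpoly q b = rpoly q' b \<Longrightarrow> rpoly q (r k) = rpoly q' (r k)"
proof -
  assume k: "k < 4" and e: "rpoly q b = rpoly q' b"
  have "m dvd q - q'" using e by (intro mdvd) simp
  then obtain c where "q - q' = m * c" by (auto simp: dvd_def)
  hence "rpoly (q - q') (r k) = 0" using rroot[OF k] by simp
  thus ?thesis by simp
qed

definition sig :: "nat \<Rightarrow> real \<Rightarrow> real" where
  "sig k x = rpoly (SOME q. x = rpoly q b) (r k)"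

lemma sig_eq: "k < 4 \<Longrightarrow> x = rpoly q b \<Longrightarrow> sig k x = rpoly q (r k)"
proof -
  assume k: "k < 4" and x: "x = rpoly q b"
  have "x = rpoly (SOME q. x = rpoly q b) b" using someI[of "\<lambda>q. x = rpoly q b" q] x by blast
  hence "rpoly (SOME q. x = rpoly q b) b = rpoly q b" using x by simp
  from emb[OF k this] show ?thesis unfolding sig_def .
qed

lemma embed_eq: "k < 4 \<Longrightarrow> x = rpoly q b \<Longrightarrow> embed b (complex_of_real (r k)) x = complex_of_real (sig k x)"
proof -
  assume k: "k < 4" and x: "x = rpoly q b"
  have "embed b (complex_of_real (r k)) x = complex_of_real (rpoly (SOME q. x = rpoly q b) (r k))"
    unfolding embed_def cpoly_of_real ..
  thus ?thesis unfolding sig_def .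
qed

lemma Qadj_iff: "x \<in> Qadj b \<longleftrightarrow> (\<exists>q. x = rpoly q b)"
  unfolding Qadj_def by auto

definition T :: "real \<Rightarrow> real" where "T x = (\<Sum>k<4. sig k x)"

lemma trace_eq: "x \<in> Qadj b \<Longrightarrow> trace b x = complex_of_real (T x)"
proof -
  assume "x \<in> Qadj b"
  then obtain q where q: "x = rpoly q b" unfolding Qadj_iff by auto
  have inj: "inj_on (\<lambda>k. complex_of_real (r k)) {..<4}"
    using rinj unfolding inj_on_def by auto
  have "trace b x = (\<Sum>k<4. embed b (complex_of_real (r k)) x)"
    unfolding trace_def cj by (rule sum.reindex[OF inj, unfolded comp_def])
  also have "\<dots> = (\<Sum>k<4. complex_of_real (sig k x))"
    by (rule sum.cong) (auto intro: embed_eq[OF _ q])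
  finally show ?thesis unfolding T_def by simp
qed

lemma sig_alg:
  assumes k: "k < 4" and x: "x \<in> ring_of_integers b"
  shows "alg_int (sig k x)"
proof -
  obtain q where q: "x = rpoly q b" using x unfolding ring_of_integers_def Qadj_iff by auto
  obtain p :: "int poly" where p: "lead_coeff p = 1" "poly (map_poly of_int p) x = 0"
    using x unfolding ring_of_integers_def alg_int_def by auto
  define P where "P = pcompose (map_poly (of_int :: int \<Rightarrow> rat) p) q"
  have e: "(of_rat \<circ> (of_int :: int \<Rightarrow> rat)) = (of_int :: int \<Rightarrow> real)" by (rule ext, simp)
  have rP: "\<And>t. rpoly P t = poly (map_poly of_int p) (rpoly q t)"
    unfolding P_def rpoly_def of_rat_hom.map_poly_pcompose poly_pcompose
    by (simp add: map_poly_map_poly e)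
  have "rpoly P b = 0" using rP p q by simp
  hence "m dvd P" by (rule mdvd)
  then obtain c where "P = m * c" by (auto simp: dvd_def)
  hence "rpoly P (r k) = 0" using rroot[OF k] by simp
  hence "poly (map_poly of_int p) (sig k x) = 0" using rP sig_eq[OF k q] by simp
  thus ?thesis using p unfolding alg_int_def by blast
qed

lemma T_alg: "x \<in> ring_of_integers b \<Longrightarrow> alg_int (T x)"
proof -
  assume x: "x \<in> ring_of_integers b"
  have "\<And>n. n \<le> 4 \<Longrightarrow> alg_int (\<Sum>k<n. sig k x)"
  proof -
    fix n :: nat assume "n \<le> 4"
    thus "alg_int (\<Sum>k<n. sig k x)"
    proof (induct n)
      case 0 show ?case using alg_int_of_int[of 0] by simp
    next
      case (Suc n) thus ?case using alg_int_add_mult sig_alg[OF _ x, of n] by simp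
    qed
  qed
  thus ?thesis unfolding T_def by simp
qed


definition "e1 = r 0 + r 1 + r 2 + r 3"
definition "e2 = r 0 * r 1 + r 0 * r 2 + r 0 * r 3 + r 1 * r 2 + r 1 * r 3 + r 2 * r 3"
definition "e3 = r 0 * r 1 * r 2 + r 0 * r 1 * r 3 + r 0 * r 2 * r 3 + r 1 * r 2 * r 3"

lemma vieta: "of_rat (coeff m 3) = - e1" "of_rat (coeff m 2) = e2" "of_rat (coeff m 1) = - e3"
proof -
  define c where "c = (\<lambda>i. (of_rat (coeff m i) :: real))"
  have c4: "c 4 = 1" using mp deg unfolding c_def by simp
  have "\<And>x. rpoly m x = (\<Sum>j\<le>4. c j * x ^ j)"
    unfolding rpoly_def poly_altdef c_def using deg by (simp add: of_rat_hom.coeff_map_poly_hom)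
  hence "\<And>x. (\<Sum>j\<le>4. c j * x ^ j) = (\<Prod>k<4. x - r k)" using fac by simp
  hence eq: "\<And>x. c 0 + c 1 * x + c 2 * x^2 + c 3 * x^3 + x^4 = (x - r 0) * (x - r 1) * (x - r 2) * (x - r 3)"
    unfolding sum5 prod4 using c4 by simp
  have pe: "\<And>x. poly [: c 0 - r 0 * r 1 * r 2 * r 3, c 1 + e3, c 2 - e2, c 3 + e1 :] x = 
     (c 0 + c 1 * x + c 2 * x^2 + c 3 * x^3 + x^4) - (x - r 0) * (x - r 1) * (x - r 2) * (x - r 3)"
    unfolding e1_def e2_def e3_def by (simp add: algebra_simps power2_eq_square power3_eq_cube power4_eq_xxxx)
  have "\<And>x. poly [: c 0 - r 0 * r 1 * r 2 * r 3, c 1 + e3, c 2 - e2, c 3 + e1 :] x = 0"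
    by (simp only: pe eq diff_self)
  hence "[: c 0 - r 0 * r 1 * r 2 * r 3, c 1 + e3, c 2 - e2, c 3 + e1 :] = 0"
    using poly_all_0_iff_0 by blast
  hence "c 1 + e3 = 0" "c 2 - e2 = 0" "c 3 + e1 = 0" by simp_all
  thus "of_rat (coeff m 3) = - e1" "of_rat (coeff m 2) = e2" "of_rat (coeff m 1) = - e3"
    unfolding c_def by simp_all
qed

definition P :: "nat \<Rightarrow> real" where "P l = (\<Sum>k<4. r k ^ l)"

lemma P_rat: "j < 4 \<Longrightarrow> P j \<in> \<rat>"
proof -
  assume "j < 4"
  hence j: "j = 0 \<or> j = 1 \<or> j = 2 \<or> j = 3" by auto
  have q1: "e1 \<in> \<rat>" using vieta(1) by (metis Rats_minus_iff Rats_of_rat)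
  have q2: "e2 \<in> \<rat>" using vieta(2) by (metis Rats_of_rat)
  have q3: "e3 \<in> \<rat>" using vieta(3) by (metis Rats_minus_iff Rats_of_rat)
  have p0: "P 0 \<in> \<rat>" unfolding P_def by simp
  have "P 1 = e1" unfolding P_def e1_def sum4 by simp
  hence p1: "P 1 \<in> \<rat>" using q1 by simp
  have "P 2 = e1^2 - 2 * e2" unfolding P_def e1_def e2_def sum4 by (rule newton2)
  hence p2: "P 2 \<in> \<rat>" using q1 q2 by (simp only: Rats_diff Rats_mult Rats_power Rats_number_of)
  have "P 3 = e1^3 - 3 * e1 * e2 + 3 * e3" unfolding P_def e1_def e2_def e3_def sum4 by (rule newton3)
  hence p3: "P 3 \<in> \<rat>" using q1 q2 q3 by (simp only: Rats_diff Rats_add Rats_mult Rats_power Rats_number_of)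
  from j p0 p1 p2 p3 show ?thesis by (elim disjE) simp_all
qed

definition rep :: "real \<Rightarrow> rat poly" where "rep x = (SOME q. x = rpoly q b) mod m"

lemma rep_eq: "x = rpoly q b \<Longrightarrow> rep x = q mod m"
proof -
  assume x: "x = rpoly q b"
  let ?s = "SOME q. x = rpoly q b"
  have "x = rpoly ?s b" using someI[of "\<lambda>q. x = rpoly q b" q] x by simp
  hence "m dvd ?s - q" using x by (intro mdvd) simp
  thus ?thesis unfolding rep_def by (simp add: mod_eq_dvd_iff)
qed

lemma rpoly_mod: "k < 4 \<Longrightarrow> rpoly (q mod m) (r k) = rpoly q (r k)"
proof -
  assume k: "k < 4"
  have "rpoly (m * (q div m) + q mod m) (r k) = rpoly m (r k) * rpoly (q div m) (r k) + rpoly (q mod m) (r k)"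
    by (simp only: rpoly_add rpoly_mult)
  hence "rpoly q (r k) = rpoly m (r k) * rpoly (q div m) (r k) + rpoly (q mod m) (r k)"
    by (simp only: mult_div_mod_eq)
  thus ?thesis using rroot[OF k] by simp
qed

lemma rpoly_mod_b: "rpoly (q mod m) b = rpoly q b"
proof -
  have "rpoly (m * (q div m) + q mod m) b = rpoly m b * rpoly (q div m) b + rpoly (q mod m) b"
    by (simp only: rpoly_add rpoly_mult)
  hence "rpoly q b = rpoly m b * rpoly (q div m) b + rpoly (q mod m) b"
    by (simp only: mult_div_mod_eq)
  thus ?thesis using mp by simp
qed

lemma rep_deg: "degree (rep x) \<le> 3"
proof (cases "rep x = 0")
  case False
  have m0: "m \<noteq> 0" using mp by auto
  have "rep x = 0 \<or> degree (rep x) < degree m" unfolding rep_def by (rule degree_mod_less[OF m0])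
  thus ?thesis using deg False by simp
qed simp

lemma T_rat: "x \<in> Qadj b \<Longrightarrow> T x \<in> \<rat>"
proof -
  assume "x \<in> Qadj b"
  then obtain q where q: "x = rpoly q b" unfolding Qadj_iff by auto
  have "T x = (\<Sum>k<4. rpoly (rep x) (r k))"
    unfolding T_def rep_eq[OF q] by (rule sum.cong) (auto simp: sig_eq[OF _ q] rpoly_mod)
  also have "\<dots> = (\<Sum>k<4. \<Sum>j<4. of_rat (coeff (rep x) j) * r k ^ j)"
    using rpoly_deg3[OF rep_deg] by simp
  also have "\<dots> = (\<Sum>j<4. of_rat (coeff (rep x) j) * P j)"
    by (simp only: P_def sum_distrib_left) (rule sum.swap)
  also have "\<dots> \<in> \<rat>"
  proof (rule Rats_sum)
    fix j assume "j \<in> {..<4::nat}"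
    thus "of_rat (coeff (rep x) j) * P j \<in> \<rat>" by (intro Rats_mult Rats_of_rat P_rat) simp
  qed
  finally show ?thesis .
qed

lemma T_int: "x \<in> ring_of_integers b \<Longrightarrow> T x \<in> \<int>"
  using T_alg T_rat alg_int_rat_int unfolding ring_of_integers_def by blast

end


lemma det2: assumes "A \<in> carrier_mat 2 2"
  shows "det A = A $$ (0,0) * A $$ (1,1) - A $$ (0,1) * A $$ (1,0)"
proof -
  have "det A = (\<Sum>i<2. A $$ (i,0) * cofactor A i 0)" by (rule laplace_expansion_column[OF assms]) simp
  also have "\<dots> = A $$ (0,0) * A $$ (1,1) - A $$ (0,1) * A $$ (1,0)"
    using assms by (simp add: eval_nat_numeral lessThan_Suc cofactor_def mat_delete_def det_single algebra_simps)
  finally show ?thesis .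
qed

definition d3 :: "'a::comm_ring_1 \<Rightarrow> 'a \<Rightarrow> 'a \<Rightarrow> 'a \<Rightarrow> 'a \<Rightarrow> 'a \<Rightarrow> 'a \<Rightarrow> 'a \<Rightarrow> 'a \<Rightarrow> 'a" where
  "d3 a b c d e f g h i = a*(e*i - f*h) - d*(b*i - c*h) + g*(b*f - c*e)"

lemma det3: assumes A: "A \<in> carrier_mat 3 3"
  shows "det A = d3 (A $$ (0,0)) (A $$ (0,1)) (A $$ (0,2)) (A $$ (1,0)) (A $$ (1,1)) (A $$ (1,2))
     (A $$ (2,0)) (A $$ (2,1)) (A $$ (2,2))"
proof -
  have md: "\<And>i j. mat_delete A i j \<in> carrier_mat 2 2" using mat_delete_carrier[OF A] by simp
  have "det A = (\<Sum>i<3. A $$ (i,0) * cofactor A i 0)" by (rule laplace_expansion_column[OF A]) simp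
  also have "\<dots> = A $$ (0,0) * cofactor A 0 0 + A $$ (1,0) * cofactor A 1 0 + A $$ (2,0) * cofactor A 2 0"
    by (simp add: eval_nat_numeral lessThan_Suc)
  also have "\<dots> = d3 (A $$ (0,0)) (A $$ (0,1)) (A $$ (0,2)) (A $$ (1,0)) (A $$ (1,1)) (A $$ (1,2))
     (A $$ (2,0)) (A $$ (2,1)) (A $$ (2,2))"
    unfolding cofactor_def det2[OF md] using A
    by (simp add: mat_delete_def d3_def eval_nat_numeral algebra_simps)
  finally show ?thesis .
qed

lemma det4: assumes A: "A \<in> carrier_mat 4 4"
  shows "det A = 
     A $$ (0,0) * d3 (A $$ (1,1)) (A $$ (1,2)) (A $$ (1,3)) (A $$ (2,1)) (A $$ (2,2)) (A $$ (2,3)) (A $$ (3,1)) (A $$ (3,2)) (A $$ (3,3))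
   - A $$ (1,0) * d3 (A $$ (0,1)) (A $$ (0,2)) (A $$ (0,3)) (A $$ (2,1)) (A $$ (2,2)) (A $$ (2,3)) (A $$ (3,1)) (A $$ (3,2)) (A $$ (3,3))
   + A $$ (2,0) * d3 (A $$ (0,1)) (A $$ (0,2)) (A $$ (0,3)) (A $$ (1,1)) (A $$ (1,2)) (A $$ (1,3)) (A $$ (3,1)) (A $$ (3,2)) (A $$ (3,3))
   - A $$ (3,0) * d3 (A $$ (0,1)) (A $$ (0,2)) (A $$ (0,3)) (A $$ (1,1)) (A $$ (1,2)) (A $$ (1,3)) (A $$ (2,1)) (A $$ (2,2)) (A $$ (2,3))" (is "_ = ?R")
proof -
  have md: "\<And>i j. mat_delete A i j \<in> carrier_mat 3 3" using mat_delete_carrier[OF A] by simp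
  have "det A = (\<Sum>i<4. A $$ (i,0) * cofactor A i 0)" by (rule laplace_expansion_column[OF A]) simp
  also have "\<dots> = A $$ (0,0) * cofactor A 0 0 + A $$ (1,0) * cofactor A 1 0 + A $$ (2,0) * cofactor A 2 0 + A $$ (3,0) * cofactor A 3 0"
    by (simp add: eval_nat_numeral lessThan_Suc)
  also have "\<dots> = ?R"
    unfolding cofactor_def det3[OF md] using A
    by (simp add: mat_delete_def eval_nat_numeral)
  finally show ?thesis .
qed

lemma vandermonde4:
  "det (mat 4 4 (\<lambda>(k,j). (x k :: 'a :: comm_ring_1) ^ j)) =
     (x 1 - x 0) * (x 2 - x 0) * (x 3 - x 0) * (x 2 - x 1) * (x 3 - x 1) * (x 3 - x 2)"
  by (subst det4) (auto simp: d3_def eval_nat_numeral algebra_simps)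


lemma poly1: 
  fixes t :: real assumes "0 \<le> t" "t \<le> 1"
  shows "4 * t * (1 - t)^4 \<le> 1024/3125"
proof -
  have id: "3072 - 9375 * (4 * t * (1 - t)^4) = (5*t-1)^2 * (3072 * (1-t)^3 + 2436 * t * (1-t)^2 + 1056 * t^2 * (1-t) + 192 * t^3)"
    by (simp add: algebra_simps power2_eq_square power3_eq_cube power4_eq_xxxx)
  have "0 \<le> 3072 * (1-t)^3 + 2436 * t * (1-t)^2 + 1056 * t^2 * (1-t) + 192 * t^3"
    using assms by (intro add_nonneg_nonneg mult_nonneg_nonneg) auto
  hence "0 \<le> 3072 - 9375 * (4 * t * (1 - t)^4)" unfolding id by simp
  thus ?thesis by simp
qed

lemma core:
  fixes a b :: real assumes "-1 \<le> a" "a \<le> b" "b \<le> 1"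
  shows "((1 - a^2) * (1 - b^2) * (b - a))^2 \<le> 1024/3125"
proof -
  define c where "c = (a + b) / 2"
  define d where "d = (b - a) / 2"
  have ab: "a = c - d" "b = c + d" unfolding c_def d_def by (simp_all add: field_simps)
  have d0: "0 \<le> d" "d \<le> 1" using assms unfolding d_def by auto
  have cb: "c \<le> 1 - d" "d - 1 \<le> c" using assms ab by auto
  have X: "(1 - a^2) * (1 - b^2) = (1 - c^2 - d^2)^2 - 4 * c^2 * d^2"
    unfolding ab by (simp add: algebra_simps power2_eq_square)
  have "0 \<le> (1 - a) * (1 + a)" using assms by (intro mult_nonneg_nonneg) auto
  hence a2: "a^2 \<le> 1" by (simp add: algebra_simps power2_eq_square)
  have "0 \<le> (1 - b) * (1 + b)" using assms by (intro mult_nonneg_nonneg) auto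
  hence b2: "b^2 \<le> 1" by (simp add: algebra_simps power2_eq_square)
  have X0: "0 \<le> (1 - a^2) * (1 - b^2)" using a2 b2 by simp
  have "0 \<le> (1 - d - c) * (1 - d + c)" using cb by (intro mult_nonneg_nonneg) auto
  hence c2: "c^2 \<le> (1 - d)^2" by (simp add: algebra_simps power2_eq_square)
  have "(3*d+1)*(d-1) \<le> 0" using d0 by (intro mult_nonneg_nonpos) auto
  hence e1: "(1-d)^2 \<le> 2 * (1 - d^2)" by (simp add: algebra_simps power2_eq_square)
  have "0 \<le> (1 - d) * (1 + d)" using d0 by (intro mult_nonneg_nonneg) auto
  hence dd: "d^2 \<le> 1" by (simp add: algebra_simps power2_eq_square)
  have "\<bar>1 - c^2 - d^2\<bar> \<le> \<bar>1 - d^2\<bar>" using c2 e1 dd by (simp add: abs_le_iff)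
  hence "(1 - c^2 - d^2)^2 \<le> (1 - d^2)^2" by (simp add: abs_le_square_iff)
  hence Xle: "(1 - a^2) * (1 - b^2) \<le> (1 - d^2)^2" unfolding X by (smt (verit) zero_le_power2 mult_nonneg_nonneg)
  have ba: "b - a = 2 * d" unfolding d_def by simp
  have Z0: "0 \<le> (1 - a^2) * (1 - b^2) * (b - a)" using X0 assms by simp
  have Zle: "(1 - a^2) * (1 - b^2) * (b - a) \<le> (1 - d^2)^2 * (2 * d)"
    unfolding ba using Xle d0 by (intro mult_right_mono) auto
  have "((1 - a^2) * (1 - b^2) * (b - a))^2 \<le> ((1 - d^2)^2 * (2 * d))^2"
    using Zle Z0 by (rule power_mono)
  also have "\<dots> = 4 * d^2 * (1 - d^2)^4" by (simp add: algebra_simps power2_eq_square power4_eq_xxxx)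
  also have "\<dots> \<le> 1024/3125" using poly1[of "d^2"] dd by simp
  finally show ?thesis .
qed

definition F :: "real \<Rightarrow> real \<Rightarrow> real \<Rightarrow> real \<Rightarrow> real" where
  "F a b c d = ((b - a) * (c - a) * (d - a) * (c - b) * (d - b) * (d - c))^2"

lemma sorted_bound:
  fixes a b c d h :: real
  assumes o: "a \<le> b" "b \<le> c" "c \<le> d" and h: "\<bar>a\<bar> \<le> h" "\<bar>d\<bar> \<le> h"
  shows "F a b c d \<le> 2^12 / 5^5 * h^12"
proof -
  define s where "s = d - a"
  have h0: "0 \<le> h" using h by simp
  have s0: "0 \<le> s" "s \<le> 2 * h" using o h unfolding s_def by auto
  show ?thesis
  proof (cases "s = 0")
    case True
    hence "a = b" "b = c" "c = d" using o unfolding s_def by auto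
    thus ?thesis using h0 unfolding F_def by simp
  next
    case False
    hence sp: "s > 0" using s0 by simp
    define \<alpha> where "\<alpha> = 2 * (b - a) / s - 1"
    define \<beta> where "\<beta> = 2 * (c - a) / s - 1"
    have r1: "b - a = s * (1 + \<alpha>) / 2" unfolding \<alpha>_def using sp by (simp add: field_simps)
    have r2: "c - a = s * (1 + \<beta>) / 2" unfolding \<beta>_def using sp by (simp add: field_simps)
    have r3: "d - a = s" unfolding s_def by simp
    have r4: "c - b = s * (\<beta> - \<alpha>) / 2" unfolding \<alpha>_def \<beta>_def using sp by (simp add: field_simps)
    have r5: "d - b = s * (1 - \<alpha>) / 2" unfolding \<alpha>_def s_def using sp s_def by (simp add: field_simps)
    have r6: "d - c = s * (1 - \<beta>) / 2" unfolding \<beta>_def s_def using sp s_def by (simp add: field_simps)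
    have ab: "-1 \<le> \<alpha>" "\<alpha> \<le> \<beta>" "\<beta> \<le> 1"
      unfolding \<alpha>_def \<beta>_def using sp o s_def by (auto simp: field_simps)
    have E: "(b - a) * (c - a) * (d - a) * (c - b) * (d - b) * (d - c) = s^6 * ((1 - \<alpha>^2) * (1 - \<beta>^2) * (\<beta> - \<alpha>)) / 32"
      unfolding r1 r2 r3 r4 r5 r6 by (simp add: field_simps power2_eq_square eval_nat_numeral)
    have "F a b c d = (s^6 * ((1 - \<alpha>^2) * (1 - \<beta>^2) * (\<beta> - \<alpha>)) / 32)^2"
      unfolding F_def E ..
    also have "\<dots> = s^12 * ((1 - \<alpha>^2) * (1 - \<beta>^2) * (\<beta> - \<alpha>))^2 / 1024"
      by (simp add: power_mult_distrib power_divide flip: power_mult)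
    also have "\<dots> \<le> s^12 * (1024/3125) / 1024"
      using core[OF ab] by (intro divide_right_mono mult_left_mono) auto
    also have "\<dots> = s^12 / 3125" by simp
    also have "\<dots> \<le> (2 * h)^12 / 3125" using s0 by (intro divide_right_mono power_mono) auto
    also have "\<dots> = 2^12 / 5^5 * h^12" by (simp add: power_mult_distrib)
    finally show ?thesis .
  qed
qed

lemma F_sym: "F a b c d = F b a c d" "F a b c d = F a c b d" "F a b c d = F a b d c"
  unfolding F_def by (simp_all add: algebra_simps power2_eq_square)

lemma F_bound:
  fixes h :: real
  assumes "\<bar>a\<bar> \<le> h" "\<bar>b\<bar> \<le> h" "\<bar>c\<bar> \<le> h" "\<bar>d\<bar> \<le> h"
  shows "F a b c d \<le> 2^12 / 5^5 * h^12"
proof -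
  define Q where "Q = (\<lambda>a b c d. \<bar>a\<bar> \<le> h \<longrightarrow> \<bar>b\<bar> \<le> h \<longrightarrow> \<bar>c\<bar> \<le> h \<longrightarrow> \<bar>d\<bar> \<le> h \<longrightarrow> F a b c d \<le> 2^12 / 5^5 * h^12)"
  have S: "\<And>a b c d. a \<le> b \<Longrightarrow> b \<le> c \<Longrightarrow> c \<le> d \<Longrightarrow> Q a b c d"
    unfolding Q_def using sorted_bound by blast
  have s1: "\<And>a b c d. Q a b c d \<Longrightarrow> Q b a c d"
  proof -
    fix a b c d assume "Q a b c d" thus "Q b a c d" unfolding Q_def using F_sym(1)[of a b c d] by auto
  qed
  have s2: "\<And>a b c d. Q a b c d \<Longrightarrow> Q a c b d"
  proof -
    fix a b c d assume "Q a b c d" thus "Q a c b d" unfolding Q_def using F_sym(2)[of a b c d] by auto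
  qed
  have s3: "\<And>a b c d. Q a b c d \<Longrightarrow> Q a b d c"
  proof -
    fix a b c d assume "Q a b c d" thus "Q a b d c" unfolding Q_def using F_sym(3)[of a b c d] by auto
  qed
  have A: "\<And>a b c d. a \<le> b \<Longrightarrow> b \<le> c \<Longrightarrow> Q a b c d"
  proof -
    fix a b c d :: real assume ab: "a \<le> b" "b \<le> c"
    consider "c \<le> d" | "b \<le> d" "d < c" | "a \<le> d" "d < b" | "d < a" by linarith
    thus "Q a b c d"
    proof cases
      case 1 thus ?thesis using S ab by blast
    next
      case 2 hence "Q a b d c" using ab by (intro S) auto
      thus ?thesis by (rule s3)
    next
      case 3 hence "Q a d b c" using ab by (intro S) auto
      thus ?thesis by (rule s3[OF s2])
    next
      case 4 hence "Q d a b c" using ab by (intro S) auto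
      thus ?thesis by (rule s3[OF s2[OF s1]])
    qed
  qed
  have B: "\<And>a b c d. a \<le> b \<Longrightarrow> Q a b c d"
  proof -
    fix a b c d :: real assume ab: "a \<le> b"
    consider "b \<le> c" | "a \<le> c" "c < b" | "c < a" by linarith
    thus "Q a b c d"
    proof cases
      case 1 thus ?thesis using A ab by blast
    next
      case 2 hence "Q a c b d" by (intro A) auto
      thus ?thesis by (rule s2)
    next
      case 3 hence "Q c a b d" using ab by (intro A) auto
      thus ?thesis by (rule s2[OF s1])
    qed
  qed
  have "Q a b c d"
  proof (cases "a \<le> b")
    case True thus ?thesis using B by blast
  next
    case False hence "Q b a c d" by (intro B) auto
    thus ?thesis by (rule s1)
  qed
  thus ?thesis using assms unfolding Q_def by blast
qed


context qf begin

lemma Qadj_add: "x \<in> Qadj b \<Longrightarrow> y \<in> Qadj b \<Longrightarrow> x + y \<in> Qadj b"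
  unfolding Qadj_iff by (metis rpoly_add)
lemma Qadj_mult: "x \<in> Qadj b \<Longrightarrow> y \<in> Qadj b \<Longrightarrow> x * y \<in> Qadj b"
  unfolding Qadj_iff by (metis rpoly_mult)
lemma Qadj_int: "of_int c \<in> Qadj b"
  unfolding Qadj_iff by (rule exI[of _ "[:of_int c:]"]) simp
lemma Qadj_pow: "b ^ i \<in> Qadj b"
  unfolding Qadj_iff by (rule exI[of _ "[:0,1:] ^ i"]) simp
lemma Qadj_sum: "finite J \<Longrightarrow> (\<And>i. i \<in> J \<Longrightarrow> y i \<in> Qadj b) \<Longrightarrow> (\<Sum>i\<in>J. of_int (c i) * y i) \<in> Qadj b"
  by (induct J rule: finite_induct) (auto intro: Qadj_add Qadj_mult Qadj_int simp: Qadj_int[of 0, simplified])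

abbreviation "OK \<equiv> ring_of_integers b"

lemma OK_Qadj: "x \<in> OK \<Longrightarrow> x \<in> Qadj b" unfolding ring_of_integers_def by auto
lemma OK_add: "x \<in> OK \<Longrightarrow> y \<in> OK \<Longrightarrow> x + y \<in> OK"
  unfolding ring_of_integers_def using Qadj_add alg_int_add_mult by auto
lemma OK_mult: "x \<in> OK \<Longrightarrow> y \<in> OK \<Longrightarrow> x * y \<in> OK"
  unfolding ring_of_integers_def using Qadj_mult alg_int_add_mult by auto
lemma OK_int: "of_int c \<in> OK"
  unfolding ring_of_integers_def using Qadj_int alg_int_of_int by auto
lemma OK_smult: "x \<in> OK \<Longrightarrow> of_int c * x \<in> OK"
  using OK_mult OK_int by blast
lemma OK_diff: "x \<in> OK \<Longrightarrow> y \<in> OK \<Longrightarrow> x - y \<in> OK"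
  using OK_add[of x "of_int (-1) * y"] OK_smult[of y "-1"] by simp
lemma OK_b: "b \<in> OK"
  unfolding ring_of_integers_def using ai Qadj_pow[of 1] by simp
lemma OK_pow: "b ^ i \<in> OK"
  by (induct i) (auto intro: OK_mult OK_b simp: OK_int[of 1, simplified])
lemma OK_sum: "finite J \<Longrightarrow> (\<And>i. i \<in> J \<Longrightarrow> y i \<in> OK) \<Longrightarrow> (\<Sum>i\<in>J. of_int (c i) * y i) \<in> OK"
  by (induct J rule: finite_induct) (auto intro: OK_add OK_smult simp: OK_int[of 0, simplified])

definition crd :: "real \<Rightarrow> nat \<Rightarrow> rat" where "crd x j = coeff (rep x) j"

lemma rep_rpoly: "x \<in> Qadj b \<Longrightarrow> rpoly (rep x) b = x"
proof -
  assume "x \<in> Qadj b"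
  then obtain q where q: "x = rpoly q b" unfolding Qadj_iff by auto
  have "rep x = q mod m" by (rule rep_eq[OF q])
  thus ?thesis using rpoly_mod_b[of q] q by simp
qed

lemma crd_expand: "x \<in> Qadj b \<Longrightarrow> x = (\<Sum>j<4. of_rat (crd x j) * b ^ j)"
  using rep_rpoly rpoly_deg3[OF rep_deg] unfolding crd_def by metis

lemma sig_expand: "x \<in> Qadj b \<Longrightarrow> k < 4 \<Longrightarrow> sig k x = (\<Sum>j<4. of_rat (crd x j) * r k ^ j)"
proof -
  assume x: "x \<in> Qadj b" and k: "k < 4"
  have "sig k x = rpoly (rep x) (r k)" using sig_eq[OF k rep_rpoly[OF x, symmetric]] .
  thus ?thesis using rpoly_deg3[OF rep_deg] unfolding crd_def by simp
qed

lemma rep_add: "x \<in> Qadj b \<Longrightarrow> y \<in> Qadj b \<Longrightarrow> rep (x + y) = rep x + rep y"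
proof -
  assume "x \<in> Qadj b" "y \<in> Qadj b"
  then obtain p q where p: "x = rpoly p b" and q: "y = rpoly q b" unfolding Qadj_iff by auto
  have e: "x + y = rpoly (p + q) b" using p q by simp
  have "rep (x + y) = (p + q) mod m" by (rule rep_eq[OF e])
  moreover have "rep x = p mod m" by (rule rep_eq[OF p])
  moreover have "rep y = q mod m" by (rule rep_eq[OF q])
  ultimately show ?thesis by (simp add: poly_mod_add_left)
qed

lemma rep_smult: "x \<in> Qadj b \<Longrightarrow> rep (of_int c * x) = smult (of_int c) (rep x)"
proof -
  assume "x \<in> Qadj b"
  then obtain p where p: "x = rpoly p b" unfolding Qadj_iff by auto
  have e: "of_int c * x = rpoly (smult (of_int c) p) b" using p by simp
  have "rep (of_int c * x) = smult (of_int c) p mod m" by (rule rep_eq[OF e])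
  moreover have "rep x = p mod m" by (rule rep_eq[OF p])
  ultimately show ?thesis by (simp add: mod_smult_left)
qed

lemma rep_0: "rep 0 = 0"
  using rep_eq[of 0 0] by simp

lemma crd_add: "x \<in> Qadj b \<Longrightarrow> y \<in> Qadj b \<Longrightarrow> crd (x + y) j = crd x j + crd y j"
  unfolding crd_def by (simp add: rep_add)
lemma crd_smult: "x \<in> Qadj b \<Longrightarrow> crd (of_int c * x) j = of_int c * crd x j"
  unfolding crd_def by (simp add: rep_smult)
lemma crd_diff: "x \<in> Qadj b \<Longrightarrow> y \<in> Qadj b \<Longrightarrow> crd (x - y) j = crd x j - crd y j"
proof -
  assume x: "x \<in> Qadj b" and y: "y \<in> Qadj b"
  have yy: "of_int (-1) * y \<in> Qadj b" using y Qadj_mult Qadj_int by blast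
  have "crd (x - y) j = crd (x + of_int (-1) * y) j" by simp
  also have "\<dots> = crd x j + crd (of_int (-1) * y) j" by (rule crd_add[OF x yy])
  also have "\<dots> = crd x j - crd y j" unfolding crd_smult[OF y] by simp
  finally show ?thesis .
qed

lemma crd_sum: "finite J \<Longrightarrow> (\<And>i. i \<in> J \<Longrightarrow> y i \<in> Qadj b) \<Longrightarrow>
   crd (\<Sum>i\<in>J. of_int (c i) * y i) j = (\<Sum>i\<in>J. of_int (c i) * crd (y i) j)"
proof (induct J rule: finite_induct)
  case empty thus ?case unfolding crd_def by (simp add: rep_0)
next
  case (insert a J)
  have "crd (\<Sum>i\<in>insert a J. of_int (c i) * y i) j = crd (of_int (c a) * y a + (\<Sum>i\<in>J. of_int (c i) * y i)) j"
    using insert by simp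
  also have "\<dots> = crd (of_int (c a) * y a) j + crd (\<Sum>i\<in>J. of_int (c i) * y i) j"
    using insert by (intro crd_add Qadj_mult Qadj_int Qadj_sum) auto
  also have "\<dots> = (\<Sum>i\<in>insert a J. of_int (c i) * crd (y i) j)"
    using insert by (simp add: crd_smult)
  finally show ?case .
qed

lemma crd_zero: "x \<in> Qadj b \<Longrightarrow> (\<And>j. j < 4 \<Longrightarrow> crd x j = 0) \<Longrightarrow> x = 0"
  using crd_expand by (metis (no_types, lifting) lessThan_iff mult_zero_left of_rat_0 sum.neutral)

lemma crd_pow: "i < 4 \<Longrightarrow> crd (b ^ i) j = (if j = i then 1 else 0)"
proof -
  assume i: "i < 4"
  have "b ^ i = rpoly ([:0,1:] ^ i) b" by simp
  hence "rep (b ^ i) = [:0,1:] ^ i mod m" by (rule rep_eq)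
  also have "\<dots> = [:0,1:] ^ i" using i deg by (intro mod_poly_less) (simp add: degree_power_eq)
  also have "\<dots> = monom 1 i" by (simp add: monom_altdef)
  finally show ?thesis unfolding crd_def by (simp add: coeff_monom)
qed

lemma sig_mult: "x \<in> Qadj b \<Longrightarrow> y \<in> Qadj b \<Longrightarrow> k < 4 \<Longrightarrow> sig k (x * y) = sig k x * sig k y"
proof -
  assume "x \<in> Qadj b" "y \<in> Qadj b" and k: "k < 4"
  then obtain p q where p: "x = rpoly p b" and q: "y = rpoly q b" unfolding Qadj_iff by auto
  have e: "x * y = rpoly (p * q) b" using p q by simp
  have "sig k (x * y) = rpoly (p * q) (r k)" by (rule sig_eq[OF k e])
  thus ?thesis using sig_eq[OF k p] sig_eq[OF k q] by simp
qed

lemma sig_pow: "k < 4 \<Longrightarrow> sig k (b ^ l) = r k ^ l"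
  using sig_eq[of k "b ^ l" "[:0,1:] ^ l"] by simp

lemma T_xb: "x \<in> Qadj b \<Longrightarrow> T (x * b ^ i) = (\<Sum>j<4. of_rat (crd x j) * P (i + j))"
proof -
  assume x: "x \<in> Qadj b"
  have "T (x * b ^ i) = (\<Sum>k<4. (\<Sum>j<4. of_rat (crd x j) * r k ^ j) * r k ^ i)"
    unfolding T_def by (rule sum.cong) (auto simp: sig_mult[OF x Qadj_pow] sig_pow sig_expand[OF x])
  also have "\<dots> = (\<Sum>k<4. \<Sum>j<4. of_rat (crd x j) * r k ^ (i + j))"
    by (simp add: sum_distrib_left sum_distrib_right power_add mult_ac)
  also have "\<dots> = (\<Sum>j<4. of_rat (crd x j) * P (i + j))"
    by (simp only: P_def sum_distrib_left) (rule sum.swap)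
  finally show ?thesis .
qed

lemma P_int: "P l \<in> \<int>"
proof -
  have "P l = T (b ^ l)" unfolding P_def T_def by (rule sum.cong) (auto simp: sig_pow)
  thus ?thesis using T_int[OF OK_pow] by simp
qed

definition VR :: "real mat" where "VR = mat 4 4 (\<lambda>(k,j). r k ^ j)"
definition GZ :: "int mat" where "GZ = mat 4 4 (\<lambda>(i,j). \<lfloor>P (i + j)\<rfloor>)"

lemma VR_carrier: "VR \<in> carrier_mat 4 4" unfolding VR_def by simp
lemma GZ_carrier: "GZ \<in> carrier_mat 4 4" unfolding GZ_def by simp

lemma det_VR: "det VR = (r 1 - r 0) * (r 2 - r 0) * (r 3 - r 0) * (r 2 - r 1) * (r 3 - r 1) * (r 3 - r 2)"
  unfolding VR_def by (rule vandermonde4)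

lemma det_VR_nz: "det VR \<noteq> 0"
proof -
  have "\<And>i j. i < 4 \<Longrightarrow> j < 4 \<Longrightarrow> i \<noteq> j \<Longrightarrow> r i - r j \<noteq> 0"
    using rinj unfolding inj_on_def by auto
  thus ?thesis unfolding det_VR by simp
qed

lemma GR: "map_mat of_int GZ = transpose_mat VR * VR"
proof (rule eq_matI)
  fix i j assume ij: "i < dim_row (transpose_mat VR * VR)" "j < dim_col (transpose_mat VR * VR)"
  hence ij4: "i < 4" "j < 4" unfolding VR_def by auto
  have "(transpose_mat VR * VR) $$ (i, j) = (\<Sum>k<4. r k ^ i * r k ^ j)"
    using ij4 unfolding VR_def by (simp add: scalar_prod_def lessThan_atLeast0)
  also have "\<dots> = P (i + j)" unfolding P_def by (simp add: power_add)
  also have "\<dots> = of_int \<lfloor>P (i + j)\<rfloor>" using P_int by simp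
  finally show "map_mat of_int GZ $$ (i, j) = (transpose_mat VR * VR) $$ (i, j)"
    using ij4 unfolding GZ_def by simp
qed (auto simp: GZ_def VR_def)

lemma det_GZ_nz: "det GZ \<noteq> 0"
proof -
  have "(of_int (det GZ) :: real) = det (map_mat of_int GZ)" by simp
  also have "\<dots> = det (transpose_mat VR) * det VR" unfolding GR
    by (rule det_mult[OF _ VR_carrier]) (use VR_carrier in simp)
  also have "\<dots> = det VR * det VR" using det_transpose[OF VR_carrier] by simp
  finally show ?thesis using det_VR_nz by auto
qed

lemma crd_int: assumes x: "x \<in> OK" and j: "j < 4" shows "of_int (det GZ) * crd x j \<in> \<int>"
proof -
  define a :: "real vec" where "a = vec 4 (\<lambda>j. of_rat (crd x j))"
  define tZ :: "int vec" where "tZ = vec 4 (\<lambda>i. \<lfloor>T (x * b ^ i)\<rfloor>)"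
  define GR :: "real mat" where "GR = map_mat of_int GZ"
  define AR :: "real mat" where "AR = map_mat of_int (adj_mat GZ)"
  have xQ: "x \<in> Qadj b" using x by (rule OK_Qadj)
  have a: "a \<in> carrier_vec 4" unfolding a_def by simp
  have GRc: "GR \<in> carrier_mat 4 4" unfolding GR_def GZ_def by simp
  have adjc: "adj_mat GZ \<in> carrier_mat 4 4" using adj_mat(1)[OF GZ_carrier] .
  have ARc: "AR \<in> carrier_mat 4 4" unfolding AR_def using adjc by simp
  have Ga: "GR *\<^sub>v a = map_vec of_int tZ"
  proof (rule eq_vecI)
    fix i assume "i < dim_vec (map_vec of_int tZ)"
    hence i: "i < 4" unfolding tZ_def by simp
    have "(GR *\<^sub>v a) $ i = (\<Sum>j<4. P (i + j) * of_rat (crd x j))"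
      using i unfolding GR_def GZ_def a_def by (simp add: scalar_prod_def lessThan_atLeast0 P_int)
    also have "\<dots> = T (x * b ^ i)" unfolding T_xb[OF xQ] by (simp add: mult_ac)
    also have "\<dots> = of_int \<lfloor>T (x * b ^ i)\<rfloor>" using T_int[OF OK_mult[OF x OK_pow]] by simp
    finally show "(GR *\<^sub>v a) $ i = map_vec of_int tZ $ i" using i unfolding tZ_def by simp
  qed (simp add: GR_def GZ_def tZ_def)
  have "AR * GR = map_mat of_int (adj_mat GZ * GZ)"
    unfolding AR_def GR_def by (rule of_int_hom.mat_hom_mult[OF adjc GZ_carrier, symmetric])
  also have "\<dots> = map_mat of_int (det GZ \<cdot>\<^sub>m 1\<^sub>m 4)" using adj_mat(3)[OF GZ_carrier] by simp
  finally have AG: "AR * GR = map_mat of_int (det GZ \<cdot>\<^sub>m 1\<^sub>m 4)" .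
  have "(AR * GR) *\<^sub>v a = AR *\<^sub>v (GR *\<^sub>v a)" using ARc GRc a by simp
  also have "\<dots> = map_vec of_int (adj_mat GZ *\<^sub>v tZ)"
    unfolding Ga AR_def by (rule of_int_hom.mult_mat_vec_hom[OF adjc, symmetric]) (simp add: tZ_def)
  finally have "(map_mat of_int (det GZ \<cdot>\<^sub>m 1\<^sub>m 4) *\<^sub>v a) $ j = map_vec of_int (adj_mat GZ *\<^sub>v tZ) $ j"
    unfolding AG by simp
  moreover have "map_mat of_int (det GZ \<cdot>\<^sub>m 1\<^sub>m 4) = (of_int (det GZ) :: real) \<cdot>\<^sub>m 1\<^sub>m 4"
    by (rule eq_matI) auto
  moreover have "((of_int (det GZ) :: real) \<cdot>\<^sub>m 1\<^sub>m 4 *\<^sub>v a) $ j = of_int (det GZ) * of_rat (crd x j)"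
    using j a unfolding a_def by simp
  moreover have "map_vec of_int (adj_mat GZ *\<^sub>v tZ) $ j = (of_int ((adj_mat GZ *\<^sub>v tZ) $ j) :: real)"
    using j adjc unfolding tZ_def by simp
  ultimately have "of_rat (of_int (det GZ) * crd x j) = (of_rat (of_int ((adj_mat GZ *\<^sub>v tZ) $ j)) :: real)"
    by (simp add: of_rat_mult)
  hence "of_int (det GZ) * crd x j = of_int ((adj_mat GZ *\<^sub>v tZ) $ j)" by (simp only: of_rat_eq_iff)
  thus ?thesis by simp
qed

end


context qf begin

definition dd :: int where "dd = \<bar>det GZ\<bar>"

lemma dd_pos: "dd > 0" unfolding dd_def using det_GZ_nz by simp

lemma crd_int': "x \<in> OK \<Longrightarrow> j < 4 \<Longrightarrow> of_int dd * crd x j \<in> \<int>"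
proof -
  assume "x \<in> OK" "j < 4"
  hence h: "of_int (det GZ) * crd x j \<in> \<int>" by (rule crd_int)
  show ?thesis
  proof (cases "det GZ \<ge> 0")
    case True thus ?thesis using h unfolding dd_def by simp
  next
    case False
    hence "of_int dd * crd x j = - (of_int (det GZ) * crd x j)" unfolding dd_def by simp
    thus ?thesis using h by simp
  qed
qed

definition nu :: "real \<Rightarrow> nat \<Rightarrow> int" where "nu x j = \<lfloor>of_int dd * crd x j\<rfloor>"

lemma nu_eq: "x \<in> OK \<Longrightarrow> j < 4 \<Longrightarrow> of_int (nu x j) = of_int dd * crd x j"
  unfolding nu_def using crd_int' by (metis Ints_cases floor_of_int)

lemma nu_lin: assumes "x \<in> OK" "y \<in> OK" "j < 4"
  shows "nu (x - of_int c * y) j = nu x j - c * nu y j"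
proof -
  have xy: "x - of_int c * y \<in> OK" using assms by (intro OK_diff OK_smult)
  have "(of_int (nu (x - of_int c * y) j) :: rat) = of_int dd * crd (x - of_int c * y) j"
    using nu_eq[OF xy assms(3)] .
  also have "\<dots> = of_int dd * crd x j - of_int c * (of_int dd * crd y j)"
  proof -
    have xQ: "x \<in> Qadj b" and yQ: "y \<in> Qadj b" using assms OK_Qadj by auto
    have cyQ: "of_int c * y \<in> Qadj b" using yQ Qadj_mult Qadj_int by blast
    have "crd (x - of_int c * y) j = crd x j - of_int c * crd y j"
      using crd_diff[OF xQ cyQ, of j] crd_smult[OF yQ, of c j] by simp
    show ?thesis unfolding \<open>crd (x - of_int c * y) j = crd x j - of_int c * crd y j\<close> by (simp add: algebra_simps)
  qed
  also have "\<dots> = of_int (nu x j - c * nu y j)"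
    using nu_eq[OF assms(1,3)] nu_eq[OF assms(2,3)] by simp
  finally show ?thesis by (simp only: of_int_eq_iff)
qed

lemma nu_zero: "x \<in> OK \<Longrightarrow> j < 4 \<Longrightarrow> nu x j = 0 \<longleftrightarrow> crd x j = 0"
  using nu_eq[of x j] dd_pos by (metis mult_eq_0_iff of_int_0_eq_iff rel_simps(70))

definition Oi :: "nat \<Rightarrow> real set" where "Oi i = {x \<in> OK. \<forall>j<i. crd x j = 0}"

lemma pow_Oi: "i < 4 \<Longrightarrow> b ^ i \<in> Oi i"
  unfolding Oi_def using OK_pow crd_pow by auto

lemma nu_pow: "i < 4 \<Longrightarrow> nu (b ^ i) i = dd"
  unfolding nu_def using crd_pow by simp

lemma Oi_diff: "x \<in> Oi i \<Longrightarrow> y \<in> Oi i \<Longrightarrow> x - of_int c * y \<in> Oi i"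
  unfolding Oi_def
  by (auto intro!: OK_diff OK_smult simp: crd_diff crd_smult OK_Qadj Qadj_mult Qadj_int)

definition mn :: "nat \<Rightarrow> nat" where "mn i = (LEAST n. n > 0 \<and> (\<exists>x\<in>Oi i. nu x i = int n))"

lemma mn_ex: "i < 4 \<Longrightarrow> \<exists>n. n > 0 \<and> (\<exists>x\<in>Oi i. nu x i = int n)"
  using pow_Oi nu_pow dd_pos by (intro exI[of _ "nat dd"]) auto

lemma mn_props: "i < 4 \<Longrightarrow> mn i > 0 \<and> (\<exists>x\<in>Oi i. nu x i = int (mn i))"
  unfolding mn_def by (rule LeastI_ex[OF mn_ex])

lemma mn_min: "x \<in> Oi i \<Longrightarrow> nu x i > 0 \<Longrightarrow> int (mn i) \<le> nu x i"
proof -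
  assume "x \<in> Oi i" "nu x i > 0"
  hence "mn i \<le> nat (nu x i)" unfolding mn_def by (intro Least_le) auto
  thus ?thesis using \<open>nu x i > 0\<close> by simp
qed

definition w :: "nat \<Rightarrow> real" where "w i = (SOME x. x \<in> Oi i \<and> nu x i = int (mn i))"

lemma w_props: "i < 4 \<Longrightarrow> w i \<in> Oi i \<and> nu (w i) i = int (mn i)"
  unfolding w_def using mn_props by (metis (mono_tags, lifting) someI_ex)

lemma w_OK: "i < 4 \<Longrightarrow> w i \<in> OK" using w_props unfolding Oi_def by auto

lemma span_aux: "\<forall>i x. 4 - i = k \<longrightarrow> i \<le> 4 \<longrightarrow> x \<in> Oi i \<longrightarrow> (\<exists>c::nat\<Rightarrow>int. x = (\<Sum>j\<in>{i..<4}. of_int (c j) * w j))"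
proof (induct k)
  case 0
  show ?case
  proof (intro allI impI)
    fix i x assume "4 - i = (0::nat)" "i \<le> 4" "x \<in> Oi i"
    hence "i = 4" "x \<in> Oi 4" by auto
    hence "x = 0" unfolding Oi_def using crd_zero OK_Qadj by auto
    thus "\<exists>c::nat\<Rightarrow>int. x = (\<Sum>j\<in>{i..<4}. of_int (c j) * w j)" using \<open>i = 4\<close> by simp
  qed
next
  case (Suc k)
  show ?case
  proof (intro allI impI)
    fix i x assume ik: "4 - i = Suc k" and "i \<le> 4" and x: "x \<in> Oi i"
    hence i: "i < 4" by simp
    define M where "M = int (mn i)"
    have M: "M > 0" using mn_props[OF i] unfolding M_def by simp
    have wi: "w i \<in> Oi i" "nu (w i) i = M" using w_props[OF i] unfolding M_def by auto
    define q where "q = nu x i div M"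
    define x' where "x' = x - of_int q * w i"
    have x': "x' \<in> Oi i" unfolding x'_def by (rule Oi_diff[OF x wi(1)])
    have xOK: "x \<in> OK" "w i \<in> OK" "x' \<in> OK" using x wi x' unfolding Oi_def by auto
    have "nu x' i = nu x i - q * M" unfolding x'_def using nu_lin[OF xOK(1,2) i] wi by simp
    also have "\<dots> = nu x i mod M" unfolding q_def by (simp add: minus_div_mult_eq_mod)
    finally have nux': "nu x' i = nu x i mod M" .
    have "nu x' i = 0"
    proof (rule ccontr)
      assume "nu x' i \<noteq> 0"
      hence "nu x' i > 0" using nux' M by (metis pos_mod_sign order_less_le)
      hence "M \<le> nu x' i" using mn_min[OF x'] unfolding M_def by simp
      thus False using nux' M by (metis pos_mod_bound not_less)
    qed
    hence "crd x' i = 0" using nu_zero[OF xOK(3) i] by simp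
    hence "x' \<in> Oi (Suc i)" using x' unfolding Oi_def by (auto simp: less_Suc_eq)
    moreover have "4 - Suc i = k" using ik by simp
    ultimately obtain c :: "nat \<Rightarrow> int" where c: "x' = (\<Sum>j\<in>{Suc i..<4}. of_int (c j) * w j)"
      using Suc.hyps i by (metis Suc_leI)
    define c' where "c' = c(i := q)"
    have "x = of_int q * w i + x'" unfolding x'_def by simp
    also have "\<dots> = of_int (c' i) * w i + (\<Sum>j\<in>{Suc i..<4}. of_int (c' j) * w j)"
      unfolding c c'_def by simp
    also have "\<dots> = (\<Sum>j\<in>{i..<4}. of_int (c' j) * w j)"
      using i by (simp add: atLeastLessThanSuc_atLeastAtMost[symmetric] sum.atLeast_Suc_lessThan)
    finally show "\<exists>c::nat\<Rightarrow>int. x = (\<Sum>j\<in>{i..<4}. of_int (c j) * w j)" by blast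
  qed
qed

lemma w_span: "x \<in> OK \<Longrightarrow> \<exists>c::nat\<Rightarrow>int. x = (\<Sum>j<4. of_int (c j) * w j)"
proof -
  assume "x \<in> OK"
  hence "x \<in> Oi 0" unfolding Oi_def by simp
  from span_aux[of 4, rule_format, of 0 x] this show ?thesis by (simp add: atLeast0LessThan)
qed

lemma w_indep:
  assumes s: "(\<Sum>j<4. of_int (c j) * w j) = 0"
  shows "\<forall>j<4. c j = 0"
proof -
  have wQ: "\<And>j. j \<in> {..<4} \<Longrightarrow> w j \<in> Qadj b" using w_OK OK_Qadj by auto
  have eq: "\<And>l. (\<Sum>j<4. of_int (c j) * crd (w j) l) = 0"
  proof -
    fix l
    have "(\<Sum>j<4. of_int (c j) * crd (w j) l) = crd (\<Sum>j<4. of_int (c j) * w j) l"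
      using crd_sum[of "{..<4}" w c l] wQ by simp
    thus "(\<Sum>j<4. of_int (c j) * crd (w j) l) = 0" unfolding s crd_def by (simp add: rep_0)
  qed
  have tri: "\<And>j l. j < 4 \<Longrightarrow> l < j \<Longrightarrow> crd (w j) l = 0" using w_props unfolding Oi_def by auto
  have diag: "\<And>l. l < 4 \<Longrightarrow> crd (w l) l \<noteq> 0"
    using w_props mn_props nu_zero w_OK by (metis of_nat_0_less_iff less_irrefl)
  have "\<And>l. l < 4 \<longrightarrow> c l = 0"
  proof (induct_tac l rule: less_induct)
    fix l assume IH: "\<And>j. j < l \<Longrightarrow> j < 4 \<longrightarrow> c j = 0"
    show "l < 4 \<longrightarrow> c l = 0"
    proof
      assume l: "l < 4"
      have z: "\<And>j. j \<in> {..<4} - {l} \<Longrightarrow> of_int (c j) * crd (w j) l = 0"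
      proof -
        fix j assume "j \<in> {..<4} - {l}"
        hence "j < 4" "j \<noteq> l" by auto
        thus "of_int (c j) * crd (w j) l = 0"
          using IH[of j] tri[of j l] l by (cases "j < l") auto
      qed
      have "(\<Sum>j<4. of_int (c j) * crd (w j) l) = of_int (c l) * crd (w l) l + (\<Sum>j\<in>{..<4} - {l}. of_int (c j) * crd (w j) l)"
        using l by (subst sum.remove[of _ l]) auto
      also have "\<dots> = of_int (c l) * crd (w l) l"
      proof -
        have "(\<Sum>j\<in>{..<4} - {l}. of_int (c j) * crd (w j) l) = 0" by (rule sum.neutral) (use z in blast)
        thus ?thesis by simp
      qed
      finally have "of_int (c l) * crd (w l) l = 0" using eq by simp
      thus "c l = 0" using diag[OF l] by simp
    qed
  qed
  thus ?thesis by blast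
qed

lemma ib_exists: "integral_basis b w"
  unfolding integral_basis_def Let_def deg
  using w_OK w_span w_indep by blast

end


context qf begin

lemma sig_add: "x \<in> Qadj b \<Longrightarrow> y \<in> Qadj b \<Longrightarrow> k < 4 \<Longrightarrow> sig k (x + y) = sig k x + sig k y"
proof -
  assume "x \<in> Qadj b" "y \<in> Qadj b" and k: "k < 4"
  then obtain p q where p: "x = rpoly p b" and q: "y = rpoly q b" unfolding Qadj_iff by auto
  have e: "x + y = rpoly (p + q) b" using p q by simp
  have "sig k (x + y) = rpoly (p + q) (r k)" by (rule sig_eq[OF k e])
  thus ?thesis using sig_eq[OF k p] sig_eq[OF k q] by simp
qed

lemma sig_int: "k < 4 \<Longrightarrow> sig k (of_int c) = of_int c"
  using sig_eq[of k "of_int c" "[:of_int c:]"] by simp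

lemma sig_sum: "finite J \<Longrightarrow> (\<And>i. i \<in> J \<Longrightarrow> y i \<in> Qadj b) \<Longrightarrow> k < 4 \<Longrightarrow>
  sig k (\<Sum>i\<in>J. of_int (c i) * y i) = (\<Sum>i\<in>J. of_int (c i) * sig k (y i))"
proof (induct J rule: finite_induct)
  case empty thus ?case using sig_int[of k 0] by simp
next
  case (insert a J)
  have yJ: "(\<Sum>i\<in>J. of_int (c i) * y i) \<in> Qadj b" using insert by (intro Qadj_sum) auto
  have ya: "of_int (c a) * y a \<in> Qadj b" using insert by (intro Qadj_mult Qadj_int) auto
  have "sig k (\<Sum>i\<in>insert a J. of_int (c i) * y i) = sig k (of_int (c a) * y a + (\<Sum>i\<in>J. of_int (c i) * y i))"
    using insert by simp
  also have "\<dots> = sig k (of_int (c a) * y a) + sig k (\<Sum>i\<in>J. of_int (c i) * y i)"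
    by (rule sig_add[OF ya yJ insert(5)])
  also have "sig k (of_int (c a) * y a) = of_int (c a) * sig k (y a)"
    using sig_mult[OF Qadj_int _ insert(5)] sig_int[OF insert(5)] insert by simp
  finally show ?case using insert by simp
qed

lemma disc_le: "field_disc b \<le> (det VR)^2"
proof -
  define \<omega> where "\<omega> = (SOME \<omega>. integral_basis b \<omega>)"
  have ib: "integral_basis b \<omega>" unfolding \<omega>_def using ib_exists by (metis someI_ex)
  hence omOK: "\<And>i. i < 4 \<Longrightarrow> \<omega> i \<in> OK"
    and span: "\<And>x. x \<in> OK \<Longrightarrow> \<exists>c :: nat \<Rightarrow> int. x = (\<Sum>i<4. of_int (c i) * \<omega> i)"
    unfolding integral_basis_def Let_def deg by auto
  have omQ: "\<And>i. i < 4 \<Longrightarrow> \<omega> i \<in> Qadj b" using omOK OK_Qadj by auto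
  define M :: "real mat" where "M = mat 4 4 (\<lambda>(k,i). sig k (\<omega> i))"
  have Mc: "M \<in> carrier_mat 4 4" unfolding M_def by simp
  have MTc: "transpose_mat M \<in> carrier_mat 4 4" unfolding M_def by simp
  have tr: "mat 4 4 (\<lambda>(i,j). trace b (\<omega> i * \<omega> j)) = map_mat complex_of_real (transpose_mat M * M)"
  proof (rule eq_matI)
    fix i j assume "i < dim_row (map_mat complex_of_real (transpose_mat M * M))"
      "j < dim_col (map_mat complex_of_real (transpose_mat M * M))"
    hence ij: "i < 4" "j < 4" unfolding M_def by auto
    have "trace b (\<omega> i * \<omega> j) = complex_of_real (T (\<omega> i * \<omega> j))"
      using ij by (intro trace_eq Qadj_mult omQ)
    also have "T (\<omega> i * \<omega> j) = (\<Sum>k<4. sig k (\<omega> i) * sig k (\<omega> j))"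
      unfolding T_def using ij by (intro sum.cong refl sig_mult omQ) auto
    also have "\<dots> = (transpose_mat M * M) $$ (i, j)"
      using ij unfolding M_def by (simp add: scalar_prod_def lessThan_atLeast0)
    finally show "mat 4 4 (\<lambda>(i,j). trace b (\<omega> i * \<omega> j)) $$ (i, j) = map_mat complex_of_real (transpose_mat M * M) $$ (i, j)"
      using ij Mc by simp
  qed (auto simp: M_def)
  have fd: "field_disc b = det M * det M"
  proof -
    have "field_disc b = Re (det (mat 4 4 (\<lambda>(i,j). trace b (\<omega> i * \<omega> j))))"
      unfolding field_disc_def Let_def deg \<omega>_def ..
    also have "\<dots> = det (transpose_mat M * M)" unfolding tr of_real_hom.hom_det by simp
    also have "\<dots> = det M * det M" using det_mult[OF MTc Mc] det_transpose[OF Mc] by simp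
    finally show ?thesis .
  qed
  have "\<forall>j<4. \<exists>c :: nat \<Rightarrow> int. b ^ j = (\<Sum>i<4. of_int (c i) * \<omega> i)" using span OK_pow by blast
  then obtain cc :: "nat \<Rightarrow> nat \<Rightarrow> int" where cc: "\<And>j. j < 4 \<Longrightarrow> b ^ j = (\<Sum>i<4. of_int (cc j i) * \<omega> i)"
    by metis
  define CZ :: "int mat" where "CZ = mat 4 4 (\<lambda>(j,i). cc j i)"
  define CR :: "real mat" where "CR = map_mat of_int CZ"
  have CZc: "CZ \<in> carrier_mat 4 4" unfolding CZ_def by simp
  have CRTc: "transpose_mat CR \<in> carrier_mat 4 4" unfolding CR_def CZ_def by simp
  have VRM: "VR = M * transpose_mat CR"
  proof (rule eq_matI)
    fix k j assume "k < dim_row (M * transpose_mat CR)" "j < dim_col (M * transpose_mat CR)"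
    hence kj: "k < 4" "j < 4" unfolding M_def CR_def CZ_def by auto
    have "VR $$ (k, j) = sig k (b ^ j)" unfolding VR_def using kj sig_pow by simp
    also have "\<dots> = (\<Sum>i<4. of_int (cc j i) * sig k (\<omega> i))"
      unfolding cc[OF kj(2)] using kj omQ by (intro sig_sum) auto
    also have "\<dots> = (M * transpose_mat CR) $$ (k, j)"
      using kj unfolding M_def CR_def CZ_def by (simp add: scalar_prod_def lessThan_atLeast0 mult.commute)
    finally show "VR $$ (k, j) = (M * transpose_mat CR) $$ (k, j)" .
  qed (auto simp: VR_def M_def CR_def CZ_def)
  have dV: "det VR = det M * of_int (det CZ)"
  proof -
    have "det VR = det M * det (transpose_mat CR)" unfolding VRM by (rule det_mult[OF Mc CRTc])
    also have "det (transpose_mat CR) = det CR" using det_transpose[of CR 4] unfolding CR_def CZ_def by simp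
    also have "det CR = of_int (det CZ)" unfolding CR_def by simp
    finally show ?thesis .
  qed
  have "det CZ \<noteq> 0" using dV det_VR_nz by auto
  hence a1: "1 \<le> \<bar>det CZ\<bar>" by arith
  hence "1 * 1 \<le> \<bar>det CZ\<bar> * \<bar>det CZ\<bar>" by (intro mult_mono) auto
  hence "1 \<le> (det CZ)^2" by (simp add: power2_eq_square abs_mult_self_eq)
  hence c1: "1 \<le> (of_int (det CZ) :: real)^2" by (metis of_int_1_le_iff of_int_power)
  have "field_disc b = (det M)^2 * 1" unfolding fd by (simp add: power2_eq_square)
  also have "\<dots> \<le> (det M)^2 * (of_int (det CZ))^2" using c1 by (intro mult_left_mono) auto
  also have "\<dots> = (det VR)^2" unfolding dV by (simp add: power_mult_distrib)
  finally show ?thesis .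
qed

lemma house_ge: "k < 4 \<Longrightarrow> \<bar>r k\<bar> \<le> house b"
proof -
  assume k: "k < 4"
  have "complex_of_real (r k) \<in> conjs b" unfolding cj using k by auto
  hence "cmod (complex_of_real (r k)) \<in> cmod ` conjs b" by (rule imageI)
  moreover have "finite (cmod ` conjs b)" unfolding cj by simp
  ultimately have "cmod (complex_of_real (r k)) \<le> house b" unfolding house_def by (simp add: Max_ge)
  thus ?thesis by simp
qed

lemma main: "field_disc b \<le> 2 ^ 12 / 5 ^ 5 * house b ^ 12"
proof -
  have "field_disc b \<le> (det VR)^2" by (rule disc_le)
  also have "\<dots> = F (r 0) (r 1) (r 2) (r 3)" unfolding det_VR F_def ..
  also have "\<dots> \<le> 2 ^ 12 / 5 ^ 5 * house b ^ 12" by (rule F_bound) (auto intro: house_ge)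
  finally show ?thesis .
qed

end

theorem proposition2p9:
  fixes \<beta> :: real
  assumes "alg_int \<beta>"
    and "degree (min_poly \<beta>) = 4"
    and "totally_real \<beta>"
  shows "field_disc \<beta> \<le> 2 ^ 12 / 5 ^ 5 * house \<beta> ^ 12"
proof -
  obtain r :: "nat \<Rightarrow> real" where r: "inj_on r {..<4}" "conjs \<beta> = (\<lambda>k. complex_of_real (r k)) ` {..<4}"
    "\<forall>x. rpoly (min_poly \<beta>) x = (\<Prod>k<4. x - r k)"
    using roots_exist[OF assms] by blast
  interpret qf \<beta> r using assms r by unfold_locales auto
  show ?thesis by (rule main)
qed


end
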